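(* Assume $\|F\|<\frac{c_1}{2\sqrt{c_2c_3}}$. Then for every $\varepsilon\in(0,\varepsilon_0]$ the set $\mathbb D_\varepsilon$ is invariant for $S(t)$, i.e. $S(t)\mathbb D_\varepsilon\subset\mathbb D_\varepsilon$ for all $t\ge0$.
   Context: Let $\mathfrak I=(a,b)\subset\mathbb R$ be a bounded interval, $\mathcal H=L^2(\mathfrak I)$ with inner product $\langle\cdot,\cdot\rangle$ and norm $\|\cdot\|$. Let $A=-\partial_{xx}$ with domain $H^2(\mathfrak I)\cap H^1_0(\mathfrak I)$, $\lambda_1>0$ its first eigenvalue, $\mathcal H^r=D(A^{r/2})$, $\|u\|_r=\|A^{r/2}u\|$, $B=I+A$, and on $\mathcal H^r$ the inner product $(u,v)_r=\langle A^{(r-1)/2}B^{1/2}u,A^{(r-1)/2}B^{1/2}v\rangle$ with norm $|||u|||_r^2=\|u\|_{r-1}^2+\|u\|_r^2$. Set $\omega=\sqrt{(1+\lambda_1)/\lambda_1}$. Let $\mu:(0,\infty)\to[0,\infty)$, $\mu\not\equiv0$, nonincreasing, absolutely continuous, with $\kappa:=\int_0^\infty\mu(s)\,ds\in(0,\infty)$, $\int_0^\infty s\mu(s)\,ds=1$, $\lim_{s\to0^+}\mu(s)<\infty$, and $\mu'+\delta\mu\le0$ a.e. for some $\delta>0$. $\mathcal M=L^2_\mu(\mathbb R^+;\mathcal H^1)$ with norm $\|\eta\|_{\mathcal M}^2=\int_0^\infty\mu(s)\|\eta(s)\|_1^2ds$; $\mathbf H=\mathcal H^1\times\mathcal M$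 with $\|(u,\eta)\|_{\mathbf H}^2=|||u|||_1^2+\|\eta\|_{\mathcal M}^2$. $T\eta=-\partial_s\eta$ with domain $\{\eta\in\mathcal M:\partial_s\eta\in\mathcal M,\ \lim_{s\to0}\|\eta(s)\|_1=0\}$. For $f\in L^2(\mathfrak I)$, $S(t)$ is the strongly continuous semigroup on $\mathbf H$ generated by $Bu_t+u_x+\int_0^\infty\mu(s)A\eta(s)\,ds+uu_x=f$, $\eta_t=T\eta+u$ (Dirichlet conditions on $u$), $S(t)z=(u(t),\eta^t)$. Let $F(x)=\int_a^xf(y)\,dy$ and for $\varepsilon>0$, $z=(u,\eta)\in\mathbf H$, $$\Lambda_\varepsilon(z)=\|z\|_{\mathbf H}^2+\frac2\kappa\int_0^\infty\mu(s)\langle F,\eta_x(s)\rangle\,ds+\frac2\kappa\|F\|^2-\frac{\varepsilon}{\sqrt\kappa}\int_0^\infty\mu(s)(u,\eta(s))_1\,ds.$$ Let $c_1,c_2,c_3>0$ and $\varepsilon_0\in(0,\frac1{2\omega})$ be constants depending only on $\mathfrak I,\mu$ such that for every $z\in\mathbf H$ and $\varepsilon\in(0,\varepsilon_0]$, $\mathcal L_\varepsilon(t)=\Lambda_\varepsilon(S(t)z)$ satisfies $\mathcal L_\varepsilon'+\varepsilon c_1\mathcal L_\varepsilon\le c_2\|F\|^2+c_3\varepsilon^2\mathcal L_\varepsilon^2$ for all $t\ge0$. Set $c_*=\sqrt{c_2/c_3}\,\big(\frac{c_1}{\sqrt{c_2c_3}}-\|F\|\big)$ and, for $\varepsilon\in(0,\varepsilon_0]$,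 $\mathbb D_\varepsilon=\{z\in\mathbf H:\Lambda_\varepsilon(z)\le c_*/\varepsilon\}$. *)

theory Defs
  imports "HOL-Analysis.Analysis"
begin

text \<open>The constant c_* = sqrt(c2/c3) (c1/sqrt(c2 c3) - norm F), with nF standing for norm F.\<close>
definition cstar :: "real \<Rightarrow> real \<Rightarrow> real \<Rightarrow> real \<Rightarrow> real" where
  "cstar c1 c2 c3 nF = sqrt (c2 / c3) * (c1 / sqrt (c2 * c3) - nF)"

definition Dset :: "(real \<Rightarrow> 'h \<Rightarrow> real) \<Rightarrow> real \<Rightarrow> real \<Rightarrow> 'h set" where
  "Dset Lam eps cs = {z. Lam eps z \<le> cs / eps}"

end

theory Submission
  imports Defs
begin

lemma barrier:
  fixes f :: "real \<Rightarrow> real" and K M :: real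
  assumes M: "M \<ge> 0"
    and f0: "f 0 \<le> K"
    and der: "\<And>t. t \<ge> 0 \<Longrightarrow> \<exists>D. (f has_real_derivative D) (at t within {0..}) \<and>
               (K \<le> f t \<longrightarrow> f t \<le> K + 1 \<longrightarrow> D \<le> M * (f t - K))"
    and t: "tend \<ge> 0"
  shows "f tend \<le> K"
proof (rule ccontr)
  assume "\<not> f tend \<le> K"
  hence ft1: "f tend > K" by simp
  have cont: "continuous_on {0..} f"
  proof (rule differentiable_imp_continuous_on)
    show "f differentiable_on {0..}"
      unfolding differentiable_on_def
    proof
      fix x :: real assume "x \<in> {0..}"
      then obtain D where "(f has_real_derivative D) (at x within {0..})" using der by auto
      thus "f differentiable at x within {0..}"
        using real_differentiable_def differentiableI by blast
    qed
  qed
  define T where "T = {s \<in> {0..tend}. f s \<le> K}"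
  have T0: "0 \<in> T" using f0 t by (simp add: T_def)
  have Tb: "bdd_above T" unfolding T_def by (rule bdd_aboveI[of _ tend]) auto
  have contT: "continuous_on {0..tend} f" using cont by (rule continuous_on_subset) auto
  have Tclosed: "closed T"
  proof -
    have "T = {0..tend} \<inter> f -` {..K}" by (auto simp: T_def)
    moreover have "closed ({0..tend} \<inter> f -` {..K})"
      by (rule continuous_closed_preimage[OF contT]) auto
    ultimately show ?thesis by simp
  qed
  define t0 where "t0 = Sup T"
  have t0T: "t0 \<in> T" unfolding t0_def using Tclosed T0 Tb closed_contains_Sup by (metis empty_iff)
  hence t0: "0 \<le> t0" "t0 \<le> tend" "f t0 \<le> K" by (auto simp: T_def)
  have t0lt: "t0 < tend" using t0 ft1 by (cases "t0 = tend") auto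
  have above: "\<And>s. t0 < s \<Longrightarrow> s \<le> tend \<Longrightarrow> f s > K"
  proof -
    fix s assume "t0 < s" "s \<le> tend"
    show "f s > K"
    proof (rule ccontr)
      assume "\<not> f s > K"
      hence "s \<in> T" using \<open>t0 < s\<close> \<open>s \<le> tend\<close> t0 by (auto simp: T_def)
      hence "s \<le> t0" unfolding t0_def using Tb cSup_upper by blast
      thus False using \<open>t0 < s\<close> by simp
    qed
  qed
  have "continuous (at t0 within {0..tend}) f"
    using contT t0 t0lt unfolding continuous_on_eq_continuous_within by auto
  then obtain d where d: "d > 0" "\<And>s. s \<in> {0..tend} \<Longrightarrow> dist s t0 < d \<Longrightarrow> dist (f s) (f t0) < 1"
    unfolding continuous_within_eps_delta by (meson zero_less_one)
  define t2 where "t2 = min tend (t0 + d/2)"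
  have t2: "t0 < t2" "t2 \<le> tend" using d t0lt by (auto simp: t2_def)
  have bnd: "\<And>s. t0 \<le> s \<Longrightarrow> s \<le> t2 \<Longrightarrow> f s \<le> K + 1"
  proof -
    fix s assume s: "t0 \<le> s" "s \<le> t2"
    have "dist s t0 < d" using s d by (auto simp: t2_def dist_real_def)
    moreover have "s \<in> {0..tend}" using s t0 t2 by auto
    ultimately have "dist (f s) (f t0) < 1" using d by blast
    thus "f s \<le> K + 1" using t0 by (auto simp: dist_real_def)
  qed
  define g where "g s = exp (- M * s) * (f s - K)" for s
  have contg: "continuous_on {t0..t2} g"
    unfolding g_def
    by (intro continuous_intros continuous_on_subset[OF cont]) (use t0 in auto)
  have dif: "g differentiable (at x)" if x: "t0 < x" "x < t2" for x
  proof -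
    have "x \<ge> 0" using x t0 by auto
    then obtain D where "(f has_real_derivative D) (at x within {0..})" using der by blast
    moreover have "at x within {0..} = at x"
      using x t0 by (intro at_within_interior) auto
    ultimately have Dx: "(f has_real_derivative D) (at x)" by simp
    have "(g has_real_derivative (exp (- M * x) * (- M) * (f x - K) + exp (- M * x) * D)) (at x)"
      unfolding g_def by (auto intro!: derivative_eq_intros Dx)
    thus "g differentiable (at x)" using real_differentiable_def by blast
  qed
  obtain l z where z: "t0 < z" "z < t2" "(g has_real_derivative l) (at z)"
      and mvt: "g t2 - g t0 = (t2 - t0) * l"
    using MVT[OF t2(1) contg dif] by blast
  obtain D where D: "(f has_real_derivative D) (at z within {0..})"
      and Dle: "K \<le> f z \<longrightarrow> f z \<le> K + 1 \<longrightarrow> D \<le> M * (f z - K)"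
    using der[of z] z t0 by auto
  have "at z within {0..} = at z" using z t0 by (intro at_within_interior) auto
  with D have D': "(f has_real_derivative D) (at z)" by simp
  have "(g has_real_derivative (exp (- M * z) * (- M) * (f z - K) + exp (- M * z) * D)) (at z)"
    unfolding g_def by (auto intro!: derivative_eq_intros D')
  hence l: "l = exp (- M * z) * (- M) * (f z - K) + exp (- M * z) * D"
    using z(3) DERIV_unique by blast
  have "K \<le> f z" using above[of z] z t2 by auto
  moreover have "f z \<le> K + 1" using bnd[of z] z by auto
  ultimately have "D \<le> M * (f z - K)" using Dle by auto
  hence "exp (- M * z) * D \<le> exp (- M * z) * (M * (f z - K))" by simp
  hence "l \<le> 0" unfolding l by (simp add: algebra_simps)
  hence "g t2 \<le> g t0" using mvt t2 by (metis diff_ge_0_iff_ge mult_nonneg_nonpos diff_le_0_iff_le less_imp_le diff_gt_0_iff_gt)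
  moreover have "g t0 \<le> 0" unfolding g_def using t0 by (simp add: mult_nonneg_nonpos)
  moreover have "g t2 > 0" unfolding g_def using above[of t2] t2 by simp
  ultimately show False by simp
qed


theorem proposition8p4:
  fixes S :: "real \<Rightarrow> 'h \<Rightarrow> 'h"
    and Lam :: "real \<Rightarrow> 'h \<Rightarrow> real"
    and c1 c2 c3 eps0 nF :: real
  assumes S0: "\<And>z. S 0 z = z"
    and S_semigroup: "\<And>t s z. t \<ge> 0 \<Longrightarrow> s \<ge> 0 \<Longrightarrow> S (t + s) z = S t (S s z)"
    and pos: "c1 > 0" "c2 > 0" "c3 > 0" "eps0 > 0"
    and nF_nonneg: "nF \<ge> 0"
    and diff_ineq: "\<And>z eps t. 0 < eps \<Longrightarrow> eps \<le> eps0 \<Longrightarrow> t \<ge> 0 \<Longrightarrow>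
        \<exists>D. ((\<lambda>s. Lam eps (S s z)) has_real_derivative D) (at t within {0..}) \<and>
            D + eps * c1 * Lam eps (S t z) \<le> c2 * nF\<^sup>2 + c3 * eps\<^sup>2 * (Lam eps (S t z))\<^sup>2"
    and small_F: "nF < c1 / (2 * sqrt (c2 * c3))"
  shows "\<forall>eps. 0 < eps \<and> eps \<le> eps0 \<longrightarrow>
           (\<forall>t\<ge>0. S t ` Dset Lam eps (cstar c1 c2 c3 nF) \<subseteq> Dset Lam eps (cstar c1 c2 c3 nF))"
proof (intro allI impI)
  fix eps t assume e: "0 < eps \<and> eps \<le> eps0" and t: "(0::real) \<le> t"
  define cs where "cs = cstar c1 c2 c3 nF"
  define a where "a = sqrt (c2 * c3) * nF"
  have sq: "sqrt (c2*c3) > 0" using pos by simp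
  have sqsq: "sqrt (c2*c3) ^ 2 = c2 * c3" using pos by simp
  have sdiv: "sqrt (c2 / c3) = sqrt (c2*c3) / c3"
    using pos by (simp add: real_sqrt_divide real_sqrt_mult field_simps)
  have csa: "cs = (c1 - a) / c3"
    unfolding cs_def cstar_def a_def sdiv using sq pos by (simp add: field_simps)
  have a_small: "2 * a < c1" unfolding a_def using small_F sq
    by (simp add: field_simps mult.commute)
  have a_nn: "a \<ge> 0" unfolding a_def using nF_nonneg sq by simp
  have cs_pos: "cs > 0" using csa a_small a_nn pos by (simp add: divide_pos_pos)
  have a2: "a^2 = c2 * c3 * nF^2" unfolding a_def using sqsq by (simp add: power_mult_distrib)
  have qcs: "c3 * cs^2 - c1 * cs + c2 * nF^2 \<le> 0"
  proof -
    have h: "c3 * cs = c1 - a" using csa pos by simp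
    have "c3 * (c3 * cs^2 - c1 * cs + c2 * nF^2) = (c3*cs)^2 - c1 * (c3*cs) + c2*c3*nF^2"
      by (simp add: algebra_simps power2_eq_square)
    also have "\<dots> = (c1 - a)^2 - c1 * (c1 - a) + a^2" unfolding h a2 by simp
    also have "\<dots> = a * (2*a - c1)" by (simp add: algebra_simps power2_eq_square)
    also have "\<dots> \<le> 0" using a_nn a_small by (simp add: mult_nonneg_nonpos)
    finally show ?thesis using pos(3) by (simp add: mult_le_0_iff)
  qed
  show "S t ` Dset Lam eps (cstar c1 c2 c3 nF) \<subseteq> Dset Lam eps (cstar c1 c2 c3 nF)"
    unfolding cs_def[symmetric]
  proof
    fix w assume "w \<in> S t ` Dset Lam eps cs"
    then obtain z where z: "Lam eps z \<le> cs / eps" and w: "w = S t z"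
      unfolding Dset_def by auto
    define f where "f s = Lam eps (S s z)" for s
    define M where "M = eps * c3 * (2*cs + eps)"
    have "f t \<le> cs / eps"
    proof (rule barrier[where M = M and f = f and tend = t and K = "cs / eps"])
      show "0 \<le> M" unfolding M_def using e pos cs_pos by simp
      show "f 0 \<le> cs / eps" unfolding f_def using S0 z by simp
      show "0 \<le> t" by fact
    next
      fix s :: real assume s: "0 \<le> s"
      obtain D where D: "(f has_real_derivative D) (at s within {0..})"
        and Dq: "D + eps * c1 * f s \<le> c2 * nF\<^sup>2 + c3 * eps\<^sup>2 * (f s)\<^sup>2"
        using diff_ineq[of eps s z] e s unfolding f_def by auto
      show "\<exists>D. (f has_real_derivative D) (at s within {0..}) \<and>
               (cs / eps \<le> f s \<longrightarrow> f s \<le> cs / eps + 1 \<longrightarrow> D \<le> M * (f s - cs / eps))"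
      proof (intro exI conjI impI)
        show "(f has_real_derivative D) (at s within {0..})" by fact
        assume l: "cs / eps \<le> f s" and u: "f s \<le> cs / eps + 1"
        define y where "y = eps * f s"
        have yl: "cs \<le> y" using l e unfolding y_def by (simp add: field_simps)
        have yu: "y \<le> cs + eps" using u e unfolding y_def by (simp add: field_simps)
        have "D \<le> c2 * nF\<^sup>2 + c3 * y^2 - c1 * y" using Dq unfolding y_def
          by (simp add: power_mult_distrib algebra_simps)
        also have "\<dots> = (c3 * cs^2 - c1 * cs + c2 * nF^2) + (y - cs) * (c3 * (y + cs) - c1)"
          by (simp add: algebra_simps power2_eq_square)
        also have "\<dots> \<le> (y - cs) * (c3 * (y + cs) - c1)" using qcs by simp
        also have "\<dots> \<le> (y - cs) * (c3 * (2*cs + eps))"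
        proof (rule mult_left_mono)
          have "c3 * (y + cs) \<le> c3 * (2*cs + eps)" using yu pos by (intro mult_left_mono) auto
          thus "c3 * (y + cs) - c1 \<le> c3 * (2*cs + eps)" using pos by linarith
        qed (use yl in auto)
        also have "\<dots> = M * (f s - cs / eps)"
          unfolding M_def y_def using e by (simp add: field_simps)
        finally show "D \<le> M * (f s - cs / eps)" .
      qed
    qed
    thus "w \<in> Dset Lam eps cs" unfolding Dset_def f_def w by simp
  qed

qed

end
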